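(* Let $m\ge1$ and $1\le t\le 2^{m-1}$ be integers and $p=t/2^m$. Let $f:\{0,1\}^n\to\{0,1\}$ and let $g=\mathrm{Red}(f):\{0,1\}^{mn}\to\{0,1\}$ be defined below. Then \[ \sum_{i=1}^{mn}I_i(g)^2\le 12p^2\lfloor\log(1/p)\rfloor\sum_{i=1}^nI_i(f)^2, \] where the influences on $f$ are w.r.t. $\mu_p$ and those on $g$ are w.r.t. the uniform measure $\mu_{1/2}$.
   Context: For $0<p<1$, $\mu_p$ is the product measure on $\{0,1\}^n$ with $\mu_p(x)=p^{\sum_i x_i}(1-p)^{n-\sum_i x_i}$. For a function $f$ on $\{0,1\}^n$ and $1\le i\le n$, the influence of coordinate $i$ w.r.t. $\mu_p$ is $I_i(f)=\Pr_{x\sim\mu_p}[f(x)\ne f(x\oplus e_i)]$, where $x\oplus e_i$ is $x$ with its $i$-th coordinate flipped. Reduction: write $y\in\{0,1\}^{mn}$ as $(y^1,\dots,y^n)$, $y^i=(y^i_1,\dots,y^i_m)\in\{0,1\}^m$, where $y^i_j$ is coordinate $(i-1)m+j$ of $y$. Let $\mathrm{Bin}(y^i)=\sum_{j=0}^{m-1}2^jy^i_{m-j}$, $h(y^i)=1$ if $\mathrm{Bin}(y^i)\ge 2^m-t$ and $0$ otherwise, and $g(y)=f(h(y^1),\dots,h(y^n))$. $\log$ is base 2. *)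

theory Defs
  imports "HOL-Analysis.Analysis"
begin

text \<open>Points of the cube {0,1}^n are represented as functions nat => bool that are
  False outside the (0-based) index range {0..<n}; coordinate i of the paper is index i-1.\<close>

definition cube :: "nat \<Rightarrow> (nat \<Rightarrow> bool) set" where
  "cube n = {x. \<forall>i. n \<le> i \<longrightarrow> \<not> x i}"

definition mu :: "real \<Rightarrow> nat \<Rightarrow> (nat \<Rightarrow> bool) \<Rightarrow> real" where
  "mu p n x = (\<Prod>i<n. if x i then p else 1 - p)"

definition flip :: "(nat \<Rightarrow> bool) \<Rightarrow> nat \<Rightarrow> (nat \<Rightarrow> bool)" where
  "flip x i = x(i := \<not> x i)"

definition influence :: "real \<Rightarrow> nat \<Rightarrow> ((nat \<Rightarrow> bool) \<Rightarrow> bool) \<Rightarrow> nat \<Rightarrow> real" where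
  "influence p n f i = (\<Sum>x\<in>cube n. if f x \<noteq> f (flip x i) then mu p n x else 0)"

text \<open>Bin(y^i) for the (0-based) i-th block of length m:
  Bin(y^i) = sum_{j=0}^{m-1} 2^j y^i_{m-j}, where y^i_k (1-based k) is 0-based coordinate i*m + k - 1.\<close>
definition blockBin :: "nat \<Rightarrow> (nat \<Rightarrow> bool) \<Rightarrow> nat \<Rightarrow> nat" where
  "blockBin m y i = (\<Sum>j<m. 2 ^ j * (if y (i * m + (m - 1 - j)) then 1 else 0))"

definition hred :: "nat \<Rightarrow> nat \<Rightarrow> (nat \<Rightarrow> bool) \<Rightarrow> nat \<Rightarrow> bool" where
  "hred m t y i = (blockBin m y i \<ge> 2 ^ m - t)"

definition Red :: "nat \<Rightarrow> nat \<Rightarrow> nat \<Rightarrow> ((nat \<Rightarrow> bool) \<Rightarrow> bool) \<Rightarrow> (nat \<Rightarrow> bool) \<Rightarrow> bool" where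
  "Red m t n f y = f (\<lambda>i. i < n \<and> hred m t y i)"

end

theory Submission
  imports Defs
begin



lemma cube_eq: "cube n = (\<lambda>S i. i \<in> S) ` Pow {..<n}"
proof (intro equalityI subsetI)
  fix x assume "x \<in> cube n"
  hence "x = (\<lambda>i. i \<in> {i. x i})" "{i. x i} \<in> Pow {..<n}"
    by (auto simp: cube_def not_le[symmetric])
  thus "x \<in> (\<lambda>S i. i \<in> S) ` Pow {..<n}" by blast
qed (auto simp: cube_def)

lemma finite_cube[simp]: "finite (cube n)"
  by (simp add: cube_eq)

lemma card_cube: "card (cube n) = 2 ^ n"
proof -
  have "inj_on (\<lambda>S i. i \<in> S) (Pow {..<n})"
    by (auto simp: inj_on_def fun_eq_iff)
  thus ?thesis by (simp add: cube_eq card_image card_Pow)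
qed

definition bin :: "nat \<Rightarrow> (nat \<Rightarrow> bool) \<Rightarrow> nat" where
  "bin m b = (\<Sum>j<m. 2 ^ j * (if b j then 1 else 0))"

lemma bin_lt: "bin m b < 2 ^ m"
proof (induction m)
  case 0 then show ?case by (simp add: bin_def)
next
  case (Suc m)
  have "bin (Suc m) b = bin m b + 2 ^ m * (if b m then 1 else 0)"
    by (simp add: bin_def)
  with Suc show ?case by auto
qed

lemma bin_inj: "bin m b = bin m c \<Longrightarrow> j < m \<Longrightarrow> b j = c j"
proof (induction m)
  case 0 then show ?case by simp
next
  case (Suc m)
  have eb: "bin (Suc m) b = bin m b + 2 ^ m * (if b m then 1 else 0)"
    and ec: "bin (Suc m) c = bin m c + 2 ^ m * (if c m then 1 else 0)"
    by (simp_all add: bin_def)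
  have lb: "bin m b < 2^m" and lc: "bin m c < 2^m" by (rule bin_lt)+
  have bm: "b m = c m"
  proof (rule ccontr)
    assume "b m \<noteq> c m"
    then show False using eb ec lb lc Suc.prems(1) by (cases "b m") auto
  qed
  hence "bin m b = bin m c" using eb ec Suc.prems(1) by simp
  then show ?case using Suc bm by (cases "j = m") auto
qed

lemma bin_cong: "(\<And>j. j < m \<Longrightarrow> b j = c j) \<Longrightarrow> bin m b = bin m c"
  by (simp add: bin_def)

lemma bin_upd: "k < m \<Longrightarrow> bin m (b(k := v)) + 2 ^ k * (if b k then 1 else 0)
   = bin m b + 2 ^ k * (if v then 1 else 0)"
proof -
  assume k: "k < m"
  have "bin m (b(k := v)) = (\<Sum>j\<in>{..<m}-{k}. 2 ^ j * (if b j then 1 else 0)) + 2 ^ k * (if v then 1 else 0)"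
    unfolding bin_def using k
    by (subst sum.remove[of _ k]) (auto intro!: sum.cong)
  moreover have "bin m b = (\<Sum>j\<in>{..<m}-{k}. 2 ^ j * (if b j then 1 else 0)) + 2 ^ k * (if b k then 1 else 0)"
    unfolding bin_def using k
    by (subst sum.remove[of _ k]) auto
  ultimately show ?thesis by simp
qed




definition binz :: "nat \<Rightarrow> (nat \<Rightarrow> bool) \<Rightarrow> nat" where
  "binz m z = bin m (\<lambda>j. z (m - 1 - j))"

definition hz :: "nat \<Rightarrow> nat \<Rightarrow> (nat \<Rightarrow> bool) \<Rightarrow> bool" where
  "hz m t z = (binz m z \<ge> 2 ^ m - t)"

lemma binz_inj: "inj_on (binz m) (cube m)"
proof (rule inj_onI)
  fix z w assume z: "z \<in> cube m" and w: "w \<in> cube m" and e: "binz m z = binz m w"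
  show "z = w"
  proof
    fix i show "z i = w i"
    proof (cases "i < m")
      case True
      have j: "m - 1 - i < m" using True by linarith
      have ii: "m - 1 - (m - 1 - i) = i" using True by linarith
      have "z (m - 1 - (m - 1 - i)) = w (m - 1 - (m - 1 - i))"
        using bin_inj[OF e[unfolded binz_def] j] .
      thus ?thesis by (simp only: ii)
    next
      case False thus ?thesis using z w by (auto simp: cube_def)
    qed
  qed
qed

lemma binz_image: "binz m ` cube m = {..<2^m}"
proof -
  have "binz m ` cube m \<subseteq> {..<2^m}" by (auto simp: binz_def bin_lt)
  moreover have "card (binz m ` cube m) = card {..<(2::nat)^m}"
    using binz_inj by (simp add: card_image card_cube)
  ultimately show ?thesis by (simp add: card_subset_eq)
qed

lemma card_hz_gen: "card {z\<in>cube m. P (binz m z)} = card {k. k < 2^m \<and> P k}"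
proof -
  have "binz m ` {z\<in>cube m. P (binz m z)} = {k. k < 2^m \<and> P k}"
  proof (intro equalityI subsetI)
    fix k assume "k \<in> {k. k < 2^m \<and> P k}"
    hence "k \<in> binz m ` cube m" "P k" using binz_image by auto
    thus "k \<in> binz m ` {z\<in>cube m. P (binz m z)}" by auto
  qed (use binz_image in auto)
  moreover have "inj_on (binz m) {z\<in>cube m. P (binz m z)}"
    using binz_inj by (rule inj_on_subset) auto
  ultimately show ?thesis using card_image by fastforce
qed

lemma card_hz_true: "t \<le> 2^m \<Longrightarrow> card {z\<in>cube m. hz m t z} = t"
proof -
  assume t: "t \<le> 2^m"
  have "{k. k < 2^m \<and> 2^m - t \<le> k} = {2^m - t..<2^m}" by auto
  moreover have "card {z\<in>cube m. hz m t z} = card {k. k < 2^m \<and> 2^m - t \<le> k}"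
    unfolding hz_def by (rule card_hz_gen)
  ultimately show ?thesis using t by simp
qed

lemma card_hz_false: "t \<le> 2^m \<Longrightarrow> card {z\<in>cube m. \<not> hz m t z} = 2^m - t"
proof -
  assume t: "t \<le> 2^m"
  have "{k. k < 2^m \<and> \<not> 2^m - t \<le> k} = {..<2^m - t}" by auto
  moreover have "card {z\<in>cube m. \<not> hz m t z} = card {k. k < 2^m \<and> \<not> 2^m - t \<le> k}"
    unfolding hz_def by (rule card_hz_gen)
  ultimately show ?thesis by simp
qed

lemma flip_cube: "z \<in> cube m \<Longrightarrow> r < m \<Longrightarrow> flip z r \<in> cube m"
  by (auto simp: cube_def flip_def)

lemma flip_flip[simp]: "flip (flip z r) r = z"
  by (auto simp: flip_def)

lemma binz_flip: assumes r: "r < m"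
  shows "binz m (flip z r) + 2 ^ (m - 1 - r) * (if z r then 1 else 0)
       = binz m z + 2 ^ (m - 1 - r) * (if z r then 0 else 1)"
proof -
  let ?b = "\<lambda>j. z (m - 1 - j)" and ?k = "m - 1 - r"
  have k: "?k < m" using r by simp
  have "binz m (flip z r) = bin m (?b(?k := \<not> z r))"
    unfolding binz_def using r by (intro bin_cong) (auto simp: flip_def)
  moreover have "?b ?k = z r" using r by simp
  ultimately show ?thesis using bin_upd[OF k, of ?b "\<not> z r"] by (simp add: binz_def)
qed

lemma card_S1: assumes r: "r < m" and t: "t \<le> 2^m"
  shows "card {z\<in>cube m. hz m t z \<and> \<not> hz m t (flip z r)} \<le> min t (2 ^ (m - 1 - r))"
proof -
  let ?S = "{z\<in>cube m. hz m t z \<and> \<not> hz m t (flip z r)}"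
  have "card ?S \<le> card {z\<in>cube m. hz m t z}" by (rule card_mono) auto
  hence c1: "card ?S \<le> t" using card_hz_true[OF t] by simp
  have "binz m ` ?S \<subseteq> {2^m - t..<2^m - t + 2^(m-1-r)}"
  proof
    fix k assume "k \<in> binz m ` ?S"
    then obtain z where z: "z \<in> ?S" and kz: "k = binz m z" by blast
    have e: "binz m (flip z r) + 2 ^ (m - 1 - r) * (if z r then 1 else 0)
       = binz m z + 2 ^ (m - 1 - r) * (if z r then 0 else 1)" by (rule binz_flip[OF r])
    show "k \<in> {2^m - t..<2^m - t + 2^(m-1-r)}"
    proof (cases "z r")
      case True
      then have "binz m (flip z r) + 2 ^ (m - 1 - r) = binz m z" using e by simp
      moreover have "2^m - t \<le> binz m z" "\<not> 2^m - t \<le> binz m (flip z r)"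
        using z by (simp_all add: hz_def)
      ultimately show ?thesis using kz by simp
    next
      case False
      then have "binz m (flip z r) = binz m z + 2 ^ (m - 1 - r)" using e by simp
      moreover have "2^m - t \<le> binz m z" "\<not> 2^m - t \<le> binz m (flip z r)"
        using z by (simp_all add: hz_def)
      ultimately show ?thesis by simp
    qed
  qed
  hence "card (binz m ` ?S) \<le> card {2^m - t..<2^m - t + 2^(m-1-r)}"
    by (intro card_mono) auto
  hence "card (binz m ` ?S) \<le> 2^(m-1-r)" by simp
  moreover have "card (binz m ` ?S) = card ?S"
    by (rule card_image, rule inj_on_subset[OF binz_inj]) auto
  ultimately show ?thesis using c1 by simp
qed

definition Acnt :: "nat \<Rightarrow> nat \<Rightarrow> nat \<Rightarrow> nat" where
  "Acnt m t r = card {z\<in>cube m. hz m t z \<noteq> hz m t (flip z r)}"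

lemma Acnt_bound: assumes r: "r < m" and t: "t \<le> 2^m"
  shows "Acnt m t r \<le> 2 * min t (2 ^ (m - 1 - r))"
proof -
  let ?S1 = "{z\<in>cube m. hz m t z \<and> \<not> hz m t (flip z r)}"
  let ?S2 = "{z\<in>cube m. \<not> hz m t z \<and> hz m t (flip z r)}"
  have split: "{z\<in>cube m. hz m t z \<noteq> hz m t (flip z r)} = ?S1 \<union> ?S2" by blast
  have u: "card (?S1 \<union> ?S2) \<le> card ?S1 + card ?S2" by (rule card_Un_le)
  have sub: "(\<lambda>z. flip z r) ` ?S2 \<subseteq> ?S1"
  proof
    fix w assume "w \<in> (\<lambda>z. flip z r) ` ?S2"
    then obtain z where z: "z \<in> ?S2" and w: "w = flip z r" by blast
    have "flip z r \<in> cube m" using z flip_cube[OF _ r, of z] by blast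
    thus "w \<in> ?S1" using z w by simp
  qed
  have inj: "inj_on (\<lambda>z. flip z r) ?S2"
    by (rule inj_onI) (metis flip_flip)
  have "card ?S2 = card ((\<lambda>z. flip z r) ` ?S2)" using card_image[OF inj] by simp
  also have "\<dots> \<le> card ?S1" by (rule card_mono[OF _ sub]) simp
  finally have c2: "card ?S2 \<le> card ?S1" .
  have c1: "card ?S1 \<le> min t (2 ^ (m - 1 - r))" by (rule card_S1[OF r t])
  have "Acnt m t r = card (?S1 \<union> ?S2)" unfolding Acnt_def split ..
  thus ?thesis using u c1 c2 by linarith
qed




lemma geom4: "3 * (\<Sum>k<K. (4::nat) ^ k) + 1 = 4 ^ K"
  by (induction K) auto

lemma pow4: "(4::nat)^k = (2^k)^2"
  by (induction k) (auto simp: power2_eq_square)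

lemma minsum_nat:
  assumes m: "m \<ge> 1" and t1: "1 \<le> t" and t2: "t \<le> 2 ^ (m - 1)"
  obtains k0 where "k0 < m" "t \<le> 2 ^ k0"
    "3 * (\<Sum>k<m. (min t (2^k))^2) \<le> 4 * t^2 + 3 * (m - k0) * t^2"
proof -
  define k0 where "k0 = (LEAST k. t \<le> (2::nat) ^ k)"
  have le: "t \<le> 2 ^ k0" unfolding k0_def by (rule LeastI[of _ "m - 1"]) (rule t2)
  have k0m: "k0 \<le> m - 1" unfolding k0_def by (rule Least_le) (rule t2)
  have lt: "\<And>k. k < k0 \<Longrightarrow> 2 ^ k < t" unfolding k0_def using not_less_Least by force
  have setsplit: "{..<m} = {..<k0} \<union> {k0..<m}" using k0m m by auto
  have "(\<Sum>k<m. (min t (2^k))^2) = (\<Sum>k<k0. (min t (2^k))^2) + (\<Sum>k\<in>{k0..<m}. (min t (2^k))^2)"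
    unfolding setsplit by (rule sum.union_disjoint) auto
  moreover have "(\<Sum>k<k0. (min t (2^k))^2) = (\<Sum>k<k0. (4::nat)^k)"
  proof (rule sum.cong)
    fix k assume "k \<in> {..<k0}"
    hence "min t (2^k) = 2^k" using lt[of k] by simp
    thus "(min t (2^k))^2 = (4::nat)^k" by (simp add: pow4)
  qed simp
  moreover have "(\<Sum>k\<in>{k0..<m}. (min t (2^k))^2) \<le> (\<Sum>k\<in>{k0..<m}. t^2)"
    by (rule sum_mono) (simp add: power_mono)
  moreover have "(\<Sum>k\<in>{k0..<m}. t^2) = (m - k0) * t^2" by simp
  moreover have "(4::nat) ^ k0 \<le> 4 * t^2"
  proof (cases k0)
    case 0 then show ?thesis using t1 by simp
  next
    case (Suc j)
    hence "2^j < t" using lt by simp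
    hence "(2^j)^2 \<le> t^2" by (simp add: power_mono)
    moreover have "(4::nat) ^ k0 = 4 * 4^j" using Suc by simp
    hence "(4::nat) ^ k0 = 4 * (2^j)^2" by (simp add: pow4)
    ultimately show ?thesis by simp
  qed
  ultimately have "3 * (\<Sum>k<m. (min t (2^k))^2) \<le> 4 * t^2 + 3 * (m - k0) * t^2"
    using geom4[of k0] by linarith
  moreover have "k0 < m" using k0m m by linarith
  ultimately show ?thesis using that le by blast
qed

lemma log_part:
  assumes t1: "1 \<le> t" and km: "k0 \<le> m" and le: "t \<le> 2 ^ k0" and p: "p = real t / 2 ^ m"
  shows "real (m - k0) \<le> real_of_int \<lfloor>log 2 (1 / p)\<rfloor>"
proof -
  have "1 / p = 2 ^ m / real t" using p by simp
  hence "log 2 (1/p) = real m - log 2 (real t)" using t1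
    by (simp add: log_divide log_nat_power)
  moreover have "log 2 (real t) \<le> log 2 (2 ^ k0)"
    using t1 le by (subst log_le_cancel_iff) (auto simp del: of_nat_power simp: of_nat_power[symmetric])
  moreover have "log 2 ((2::real) ^ k0) = real k0" by (simp add: log_nat_power)
  ultimately have "real m - real k0 \<le> log 2 (1/p)" by linarith
  hence "real (m - k0) \<le> log 2 (1/p)" using km by (simp add: of_nat_diff)
  hence "int (m - k0) \<le> \<lfloor>log 2 (1 / p)\<rfloor>" by (simp add: le_floor_iff)
  thus ?thesis by linarith
qed




lemma coef_bound:
  assumes m: "m \<ge> 1" and t1: "1 \<le> t" and t2: "t \<le> 2 ^ (m - 1)" and p: "p = real t / 2 ^ m"
  shows "(\<Sum>r<m. (real (Acnt m t r) / 2^m)^2) \<le> 12 * p^2 * real_of_int \<lfloor>log 2 (1 / p)\<rfloor>"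
proof -
  have tm: "t \<le> 2^m" using t2 m by (metis diff_le_self le_trans one_le_numeral power_increasing)
  define N :: real where "N = 2^m"
  have Npos: "N > 0" by (simp add: N_def)
  obtain k0 where k0: "k0 < m" "t \<le> 2 ^ k0"
    and S: "3 * (\<Sum>k<m. (min t (2^k))^2) \<le> 4 * t^2 + 3 * (m - k0) * t^2"
    using minsum_nat[OF m t1 t2] by blast
  define L where "L = real_of_int \<lfloor>log 2 (1 / p)\<rfloor>"
  have Lk: "real (m - k0) \<le> L" unfolding L_def
    by (rule log_part[OF t1 _ k0(2) p]) (use k0 in simp)
  have L1: "1 \<le> L" using Lk k0(1) by linarith
  have "(\<Sum>r<m. (real (Acnt m t r) / N)^2) \<le> (\<Sum>r<m. (2 * real (min t (2 ^ (m - Suc r)))) ^2 / N^2)"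
  proof (rule sum_mono)
    fix r assume "r \<in> {..<m}"
    hence "Acnt m t r \<le> 2 * min t (2 ^ (m - 1 - r))" using Acnt_bound tm by simp
    hence "real (Acnt m t r) \<le> 2 * real (min t (2 ^ (m - Suc r)))"
      by (metis Suc_eq_plus1 diff_diff_left of_nat_le_iff of_nat_mult of_nat_numeral plus_1_eq_Suc)
    hence "(real (Acnt m t r))^2 \<le> (2 * real (min t (2 ^ (m - Suc r))))^2"
      by (intro power_mono) auto
    thus "(real (Acnt m t r) / N)^2 \<le> (2 * real (min t (2 ^ (m - Suc r)))) ^2 / N^2"
      by (simp add: power_divide divide_right_mono)
  qed
  also have "\<dots> = (4 / N^2) * (\<Sum>r<m. real ((min t (2 ^ (m - Suc r)))^2))"
    by (simp add: sum_distrib_left power_mult_distrib)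
  also have "(\<Sum>r<m. real ((min t (2 ^ (m - Suc r)))^2)) = (\<Sum>k<m. real ((min t (2 ^ k))^2))"
    by (rule sum.nat_diff_reindex)
  also have "\<dots> = real (\<Sum>k<m. (min t (2 ^ k))^2)" by simp
  also have "(4 / N^2) * \<dots> \<le> (4 / N^2) * ((4 * (real t)^2 + 3 * real (m - k0) * (real t)^2) / 3)"
  proof -
    have "3 * real (\<Sum>k<m. (min t (2^k))^2) \<le> 4 * (real t)^2 + 3 * real (m - k0) * (real t)^2"
      using S by (metis (mono_tags) of_nat_le_iff of_nat_add of_nat_mult of_nat_numeral of_nat_power)
    thus ?thesis using Npos by (intro mult_left_mono) auto
  qed
  also have "\<dots> \<le> (4 / N^2) * (3 * L * (real t)^2)"
  proof -
    have "3 * real (m - k0) * (real t)^2 \<le> 3 * L * (real t)^2"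
      using Lk by (intro mult_right_mono) auto
    moreover have "4 * (real t)^2 \<le> 6 * L * (real t)^2"
      using L1 by (intro mult_right_mono) auto
    ultimately show ?thesis using Npos by (intro mult_left_mono) auto
  qed
  also have "\<dots> = 12 * p^2 * L" using p by (simp add: N_def power_divide)
  finally show ?thesis by (simp add: N_def L_def)
qed




definition joinb :: "nat \<Rightarrow> nat \<Rightarrow> (nat \<Rightarrow> nat \<Rightarrow> bool) \<Rightarrow> nat \<Rightarrow> bool" where
  "joinb m n Y = (\<lambda>k. k < m * n \<and> Y (k div m) (k mod m))"

definition splitb :: "nat \<Rightarrow> nat \<Rightarrow> (nat \<Rightarrow> bool) \<Rightarrow> nat \<Rightarrow> nat \<Rightarrow> bool" where
  "splitb m n y = (\<lambda>i\<in>{..<n}. \<lambda>r. r < m \<and> y (i * m + r))"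

lemma idx_lt: "i < n \<Longrightarrow> r < m \<Longrightarrow> i * m + r < m * (n::nat)"
proof -
  assume "i < n" "r < m"
  hence "i * m + r < i * m + m" by simp
  also have "\<dots> = (i + 1) * m" by simp
  also have "\<dots> \<le> n * m" using \<open>i < n\<close> by (intro mult_right_mono) auto
  finally show ?thesis by (simp add: mult.commute)
qed

lemma div_lt: "k < m * (n::nat) \<Longrightarrow> k div m < n"
  by (simp add: less_mult_imp_div_less mult.commute)

lemma joinb_bij: assumes m: "m \<ge> 1"
  shows "bij_betw (joinb m n) (PiE {..<n} (\<lambda>_. cube m)) (cube (m * n))"
proof (rule bij_betw_byWitness[where f' = "splitb m n"])
  show "\<forall>Y\<in>PiE {..<n} (\<lambda>_. cube m). splitb m n (joinb m n Y) = Y"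
  proof
    fix Y assume Y: "Y \<in> PiE {..<n} (\<lambda>_. cube m)"
    show "splitb m n (joinb m n Y) = Y"
    proof
      fix i show "splitb m n (joinb m n Y) i = Y i"
      proof (cases "i < n")
        case True
        have Yi: "Y i \<in> cube m" using Y True by auto
        show ?thesis
        proof
          fix r show "splitb m n (joinb m n Y) i r = Y i r"
          proof (cases "r < m")
            case r: True
            have "(i * m + r) div m = i" "(i * m + r) mod m = r" using r by auto
            thus ?thesis using True r idx_lt[OF True r] by (simp add: splitb_def joinb_def)
          next
            case False thus ?thesis using Yi True by (simp add: splitb_def cube_def)
          qed
        qed
      next
        case False thus ?thesis using Y by (auto simp: splitb_def PiE_def extensional_def)
      qed
    qed
  qed
  show "\<forall>y\<in>cube (m * n). joinb m n (splitb m n y) = y"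
  proof
    fix y assume y: "y \<in> cube (m * n)"
    show "joinb m n (splitb m n y) = y"
    proof
      fix k show "joinb m n (splitb m n y) k = y k"
      proof (cases "k < m * n")
        case True
        have "k div m < n" using div_lt True .
        moreover have "k div m * m + k mod m = k" by simp
        moreover have "k mod m < m" using m by simp
        ultimately show ?thesis using True by (simp add: joinb_def splitb_def)
      next
        case False thus ?thesis using y by (simp add: joinb_def cube_def)
      qed
    qed
  qed
  show "joinb m n ` PiE {..<n} (\<lambda>_. cube m) \<subseteq> cube (m * n)"
    by (auto simp: joinb_def cube_def)
  show "splitb m n ` cube (m * n) \<subseteq> PiE {..<n} (\<lambda>_. cube m)"
    by (auto simp: splitb_def cube_def)
qed

lemma hred_join: assumes m: "m \<ge> 1" and i: "i < n"
  shows "hred m t (joinb m n Y) i = hz m t (Y i)"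
proof -
  have "blockBin m (joinb m n Y) i = bin m (\<lambda>j. joinb m n Y (i * m + (m - 1 - j)))"
    by (simp add: blockBin_def bin_def)
  also have "\<dots> = binz m (Y i)" unfolding binz_def
  proof (rule bin_cong)
    fix j assume j: "j < m"
    hence r: "m - 1 - j < m" by linarith
    show "joinb m n Y (i * m + (m - 1 - j)) = Y i (m - 1 - j)"
      using idx_lt[OF i r] r by (simp add: joinb_def)
  qed
  finally show ?thesis by (simp add: hred_def hz_def)
qed

definition Hn :: "nat \<Rightarrow> nat \<Rightarrow> nat \<Rightarrow> (nat \<Rightarrow> nat \<Rightarrow> bool) \<Rightarrow> nat \<Rightarrow> bool" where
  "Hn m t n Y = (\<lambda>i. i < n \<and> hz m t (Y i))"

lemma Red_join: "m \<ge> 1 \<Longrightarrow> Red m t n f (joinb m n Y) = f (Hn m t n Y)"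
proof -
  assume m: "m \<ge> 1"
  have "(\<lambda>i. i < n \<and> hred m t (joinb m n Y) i) = (\<lambda>i. i < n \<and> hz m t (Y i))"
    using hred_join[OF m] by blast
  thus ?thesis unfolding Red_def Hn_def by simp
qed

lemma flip_join: assumes m: "m \<ge> 1" and i0: "i0 < n" and r: "r < m"
  shows "flip (joinb m n Y) (i0 * m + r) = joinb m n (Y(i0 := flip (Y i0) r))"
proof
  fix k
  show "flip (joinb m n Y) (i0 * m + r) k = joinb m n (Y(i0 := flip (Y i0) r)) k"
  proof (cases "k = i0 * m + r")
    case True
    thus ?thesis using idx_lt[OF i0 r] r by (simp add: flip_def joinb_def)
  next
    case False
    have ne: "k div m = i0 \<Longrightarrow> k mod m \<noteq> r"
    proof
      assume "k div m = i0" "k mod m = r"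
      hence "k = i0 * m + r" using div_mult_mod_eq[of k m] by simp
      thus False using False by simp
    qed
    have "flip (joinb m n Y) (i0 * m + r) k = joinb m n Y k" using False by (simp add: flip_def)
    moreover have "joinb m n (Y(i0 := flip (Y i0) r)) k = joinb m n Y k"
    proof (cases "k div m = i0")
      case True
      hence "flip (Y i0) r (k mod m) = Y i0 (k mod m)" using ne by (simp add: flip_def)
      thus ?thesis using True by (simp add: joinb_def)
    next
      case False thus ?thesis by (simp add: joinb_def)
    qed
    ultimately show ?thesis by simp
  qed
qed

lemma fneq_upd: "(f x \<noteq> f (x(i := v))) = (x i \<noteq> v \<and> f (x(i := False)) \<noteq> f (x(i := True)))"
  by (cases "x i"; cases v) (auto simp: fun_upd_idem)




lemma fiber:
  fixes G :: "(nat \<Rightarrow> bool) \<Rightarrow> real" and w :: "nat \<Rightarrow> 'a \<Rightarrow> real"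
  assumes C: "finite C"
  shows "(\<Sum>Y\<in>PiE {..<n} (\<lambda>_. C). G (\<lambda>i. i < n \<and> \<phi> (Y i)) * (\<Prod>i<n. w i (Y i)))
       = (\<Sum>x\<in>cube n. G x * (\<Prod>i<n. \<Sum>z\<in>{z\<in>C. \<phi> z = x i}. w i z))"
proof -
  let ?S = "PiE {..<n} (\<lambda>_. C)" and ?g = "\<lambda>Y i. i < n \<and> \<phi> (Y i)"
  have fS: "finite ?S" using C by (simp add: finite_PiE)
  have gS: "?g ` ?S \<subseteq> cube n" unfolding cube_def by (rule image_subsetI) simp
  have "(\<Sum>Y\<in>?S. G (?g Y) * (\<Prod>i<n. w i (Y i)))
      = (\<Sum>x\<in>cube n. \<Sum>Y\<in>{Y. Y \<in> ?S \<and> ?g Y = x}. G (?g Y) * (\<Prod>i<n. w i (Y i)))"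
    by (rule sum.group[OF fS finite_cube gS, symmetric])
  also have "\<dots> = (\<Sum>x\<in>cube n. G x * (\<Prod>i<n. \<Sum>z\<in>{z\<in>C. \<phi> z = x i}. w i z))"
  proof (rule sum.cong[OF refl])
    fix x assume x: "x \<in> cube n"
    have eq: "{Y. Y \<in> ?S \<and> ?g Y = x} = PiE {..<n} (\<lambda>i. {z\<in>C. \<phi> z = x i})"
    proof (intro equalityI subsetI)
      fix Y assume "Y \<in> {Y. Y \<in> ?S \<and> ?g Y = x}"
      hence Y: "Y \<in> ?S" "?g Y = x" by auto
      have "\<And>i. i < n \<Longrightarrow> \<phi> (Y i) = x i" using Y(2) by (auto simp: fun_eq_iff)
      thus "Y \<in> PiE {..<n} (\<lambda>i. {z\<in>C. \<phi> z = x i})" using Y(1) unfolding PiE_iff by blast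
    next
      fix Y assume Y: "Y \<in> PiE {..<n} (\<lambda>i. {z\<in>C. \<phi> z = x i})"
      hence "Y \<in> ?S" unfolding PiE_iff by blast
      moreover have "?g Y = x"
      proof
        fix i show "?g Y i = x i"
        proof (cases "i < n")
          case True thus ?thesis using Y unfolding PiE_iff by auto
        next
          case False thus ?thesis using x by (simp add: cube_def)
        qed
      qed
      ultimately show "Y \<in> {Y. Y \<in> ?S \<and> ?g Y = x}" by simp
    qed
    have "(\<Sum>Y\<in>{Y. Y \<in> ?S \<and> ?g Y = x}. G (?g Y) * (\<Prod>i<n. w i (Y i)))
        = (\<Sum>Y\<in>PiE {..<n} (\<lambda>i. {z\<in>C. \<phi> z = x i}). G x * (\<Prod>i<n. w i (Y i)))"
      unfolding eq[symmetric] by (rule sum.cong) auto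
    also have "\<dots> = G x * (\<Sum>Y\<in>PiE {..<n} (\<lambda>i. {z\<in>C. \<phi> z = x i}). \<Prod>i<n. w i (Y i))"
      by (simp add: sum_distrib_left)
    also have "\<dots> = G x * (\<Prod>i<n. \<Sum>z\<in>{z\<in>C. \<phi> z = x i}. w i z)"
      using C by (subst prod_sum_PiE[symmetric]) auto
    finally show "(\<Sum>Y\<in>{Y. Y \<in> ?S \<and> ?g Y = x}. G (?g Y) * (\<Prod>i<n. w i (Y i)))
        = G x * (\<Prod>i<n. \<Sum>z\<in>{z\<in>C. \<phi> z = x i}. w i z)" .
  qed
  finally show ?thesis .
qed

lemma involution:
  fixes D R :: "(nat \<Rightarrow> bool) \<Rightarrow> real" and \<psi> :: "bool \<Rightarrow> real"
  assumes i0: "i0 < n" and D: "\<And>x b. D (x(i0 := b)) = D x" and R: "\<And>x b. R (x(i0 := b)) = R x"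
  shows "(\<Sum>x\<in>cube n. D x * \<psi> (x i0) * R x) = (\<psi> True + \<psi> False) / 2 * (\<Sum>x\<in>cube n. D x * R x)"
proof -
  let ?s = "\<lambda>x. x(i0 := \<not> x i0)"
  have ss: "\<And>x. ?s (?s x) = x" by auto
  have sc: "\<And>x. x \<in> cube n \<Longrightarrow> ?s x \<in> cube n" using i0 by (auto simp: cube_def)
  have "(\<Sum>x\<in>cube n. D x * \<psi> (x i0) * R x) = (\<Sum>x\<in>cube n. D (?s x) * \<psi> (?s x i0) * R (?s x))"
    by (rule sum.reindex_bij_witness[where i = ?s and j = ?s]) (auto simp: sc)
  also have "\<dots> = (\<Sum>x\<in>cube n. D x * \<psi> (\<not> x i0) * R x)"
    using D R by simp
  finally have e: "(\<Sum>x\<in>cube n. D x * \<psi> (x i0) * R x) = (\<Sum>x\<in>cube n. D x * \<psi> (\<not> x i0) * R x)" .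
  have "2 * (\<Sum>x\<in>cube n. D x * \<psi> (x i0) * R x)
      = (\<Sum>x\<in>cube n. D x * \<psi> (x i0) * R x) + (\<Sum>x\<in>cube n. D x * \<psi> (\<not> x i0) * R x)"
    using e by simp
  also have "\<dots> = (\<Sum>x\<in>cube n. (\<psi> True + \<psi> False) * (D x * R x))"
  proof (subst sum.distrib[symmetric], rule sum.cong[OF refl])
    fix x :: "nat \<Rightarrow> bool"
    show "D x * \<psi> (x i0) * R x + D x * \<psi> (\<not> x i0) * R x = (\<psi> True + \<psi> False) * (D x * R x)"
      by (cases "x i0") (simp_all add: algebra_simps)
  qed
  also have "\<dots> = (\<psi> True + \<psi> False) * (\<Sum>x\<in>cube n. D x * R x)"
    by (simp add: sum_distrib_left)
  finally show ?thesis by simp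
qed




lemma mu_half: "mu (1/2) N y = (1/2) ^ N"
proof -
  have "(\<Prod>i<N. if y i then (1::real)/2 else 1 - 1/2) = (\<Prod>i<N. (1::real)/2)"
    by (rule prod.cong) auto
  thus ?thesis unfolding mu_def by simp
qed

lemma card_hz_real: assumes t: "t \<le> 2^m" and p: "p = real t / 2 ^ m"
  shows "real (card {z\<in>cube m. hz m t z = b}) = 2^m * (if b then p else 1 - p)"
proof (cases b)
  case True thus ?thesis using card_hz_true[OF t] p by simp
next
  case False
  have "real (card {z\<in>cube m. \<not> hz m t z}) = 2^m - real t"
    using card_hz_false[OF t] t by (simp add: of_nat_diff)
  thus ?thesis using False p by (simp add: algebra_simps)
qed

lemma infl_f:
  fixes f :: "(nat \<Rightarrow> bool) \<Rightarrow> bool" and p :: real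
  assumes i0: "i0 < n"
  defines "Df \<equiv> \<lambda>x. (if f (x(i0:=False)) \<noteq> f (x(i0:=True)) then 1 else 0 :: real)"
    and "R' \<equiv> \<lambda>x. \<Prod>i\<in>{..<n}-{i0}. (if x i then p else 1 - p)"
  shows "influence p n f i0 = 1/2 * (\<Sum>x\<in>cube n. Df x * R' x)"
proof -
  have "influence p n f i0 = (\<Sum>x\<in>cube n. Df x * (if x i0 then p else 1 - p) * R' x)"
    unfolding influence_def
  proof (rule sum.cong[OF refl])
    fix x :: "nat \<Rightarrow> bool"
    have mu: "mu p n x = (if x i0 then p else 1 - p) * R' x"
      unfolding mu_def R'_def using i0 by (subst prod.remove[of _ i0]) auto
    have "(f x \<noteq> f (flip x i0)) = (f (x(i0:=False)) \<noteq> f (x(i0:=True)))"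
      unfolding flip_def by (subst fneq_upd) simp
    thus "(if f x \<noteq> f (flip x i0) then mu p n x else 0) = Df x * (if x i0 then p else 1 - p) * R' x"
      unfolding Df_def mu by simp
  qed
  also have "\<dots> = ((if True then p else 1 - p) + (if False then p else 1 - p)) / 2 * (\<Sum>x\<in>cube n. Df x * R' x)"
    by (rule involution[OF i0]) (auto simp: Df_def R'_def intro!: prod.cong)
  finally show ?thesis by simp
qed

lemma infl_g:
  assumes m: "m \<ge> 1" and t: "t \<le> 2^m" and i0: "i0 < n" and r: "r < m" and p: "p = real t / 2 ^ m"
  shows "influence (1/2) (m * n) (Red m t n f) (i0 * m + r) = real (Acnt m t r) / 2^m * influence p n f i0"
proof -
  define Df where "Df \<equiv> \<lambda>x. (if f (x(i0:=False)) \<noteq> f (x(i0:=True)) then 1 else 0 :: real)"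
  define R' where "R' \<equiv> \<lambda>x. \<Prod>i\<in>{..<n}-{i0}. (if x i then p else 1 - p)"
  define a where "a \<equiv> \<lambda>z. (if hz m t z \<noteq> hz m t (flip z r) then 1 else 0 :: real)"
  define w where "w \<equiv> \<lambda>i z. (if i = i0 then a z else 1 :: real)"
  define c where "c \<equiv> \<lambda>b. (\<Sum>z\<in>{z\<in>cube m. hz m t z = b}. a z)"
  define K :: real where "K = (2^m)^(n-1)"
  define g where "g = Red m t n f"
  let ?j = "i0 * m + r"
  let ?ind = "\<lambda>y. (if g y \<noteq> g (flip y ?j) then 1 else 0 :: real)"
  have s1: "influence (1/2) (m * n) g ?j = (1/2)^(m*n) * (\<Sum>y\<in>cube (m*n). ?ind y)"
    unfolding influence_def mu_half sum_distrib_left by (rule sum.cong) auto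
  have s2: "(\<Sum>y\<in>cube (m*n). ?ind y) = (\<Sum>Y\<in>PiE {..<n} (\<lambda>_. cube m). ?ind (joinb m n Y))"
    by (rule sum.reindex_bij_betw[OF joinb_bij[OF m], symmetric])
  have s3: "?ind (joinb m n Y) = Df (\<lambda>i. i < n \<and> hz m t (Y i)) * (\<Prod>i<n. w i (Y i))" for Y
  proof -
    let ?Y' = "Y(i0 := flip (Y i0) r)"
    have e1: "g (joinb m n Y) = f (Hn m t n Y)" unfolding g_def by (rule Red_join[OF m])
    have e2: "g (flip (joinb m n Y) ?j) = f ((Hn m t n Y)(i0 := hz m t (flip (Y i0) r)))"
    proof -
      have "g (flip (joinb m n Y) ?j) = f (Hn m t n ?Y')"
        unfolding g_def flip_join[OF m i0 r] by (rule Red_join[OF m])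
      moreover have "Hn m t n ?Y' = (Hn m t n Y)(i0 := hz m t (flip (Y i0) r))"
        using i0 by (auto simp: Hn_def)
      ultimately show ?thesis by simp
    qed
    have hi: "Hn m t n Y i0 = hz m t (Y i0)" using i0 by (simp add: Hn_def)
    have pw: "(\<Prod>i<n. w i (Y i)) = a (Y i0)" unfolding w_def using i0 by simp
    show ?thesis unfolding e1 e2 pw
      by (subst fneq_upd) (simp add: hi a_def Df_def Hn_def i0)
  qed
  have s4: "(\<Sum>Y\<in>PiE {..<n} (\<lambda>_. cube m). ?ind (joinb m n Y))
      = (\<Sum>x\<in>cube n. Df x * (\<Prod>i<n. \<Sum>z\<in>{z\<in>cube m. hz m t z = x i}. w i z))"
    unfolding s3 by (rule fiber) simp
  have s5: "(\<Prod>i<n. \<Sum>z\<in>{z\<in>cube m. hz m t z = x i}. w i z) = c (x i0) * (K * R' x)" for x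
  proof -
    have "(\<Prod>i<n. \<Sum>z\<in>{z\<in>cube m. hz m t z = x i}. w i z)
        = (\<Sum>z\<in>{z\<in>cube m. hz m t z = x i0}. w i0 z) * (\<Prod>i\<in>{..<n}-{i0}. \<Sum>z\<in>{z\<in>cube m. hz m t z = x i}. w i z)"
      using i0 by (subst prod.remove[of _ i0]) auto
    also have "(\<Sum>z\<in>{z\<in>cube m. hz m t z = x i0}. w i0 z) = c (x i0)"
      by (simp add: w_def c_def)
    also have "(\<Prod>i\<in>{..<n}-{i0}. \<Sum>z\<in>{z\<in>cube m. hz m t z = x i}. w i z)
        = (\<Prod>i\<in>{..<n}-{i0}. 2^m * (if x i then p else 1 - p))"
    proof (rule prod.cong[OF refl])
      fix i assume "i \<in> {..<n} - {i0}"
      hence "\<And>z. w i z = 1" by (simp add: w_def)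
      hence "(\<Sum>z\<in>{z\<in>cube m. hz m t z = x i}. w i z) = real (card {z\<in>cube m. hz m t z = x i})"
        by simp
      also have "\<dots> = 2^m * (if x i then p else 1 - p)" by (rule card_hz_real[OF t p])
      finally show "(\<Sum>z\<in>{z\<in>cube m. hz m t z = x i}. w i z) = 2^m * (if x i then p else 1 - p)" .
    qed
    also have "\<dots> = K * R' x"
      using i0 by (simp add: prod.distrib K_def R'_def)
    finally show ?thesis .
  qed
  have s6: "(\<Sum>x\<in>cube n. Df x * (c (x i0) * (K * R' x))) = (c True + c False) / 2 * (\<Sum>x\<in>cube n. Df x * (K * R' x))"
  proof -
    have "(\<Sum>x\<in>cube n. Df x * (c (x i0) * (K * R' x))) = (\<Sum>x\<in>cube n. Df x * c (x i0) * (K * R' x))"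
      by (simp add: mult.assoc)
    also have "\<dots> = (c True + c False) / 2 * (\<Sum>x\<in>cube n. Df x * (K * R' x))"
      by (rule involution[OF i0]) (auto simp: Df_def R'_def intro!: prod.cong)
    finally show ?thesis .
  qed
  have s7: "c True + c False = real (Acnt m t r)"
  proof -
    have "c True + c False = (\<Sum>z\<in>cube m. (if hz m t z then a z else 0) + (if \<not> hz m t z then a z else 0))"
      unfolding c_def by (simp add: sum.inter_filter sum.distrib)
    also have "\<dots> = (\<Sum>z\<in>cube m. a z)" by (rule sum.cong) auto
    also have "\<dots> = real (Acnt m t r)" unfolding a_def Acnt_def
      by (simp add: sum.inter_filter[symmetric])
    finally show ?thesis .
  qed
  have fI: "influence p n f i0 = 1/2 * (\<Sum>x\<in>cube n. Df x * R' x)"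
    unfolding Df_def R'_def by (rule infl_f[OF i0])
  have n1: "n = Suc (n - 1)" using i0 by simp
  have pw: "((1::real)/2)^(m*n) * K = 1 / 2^m"
  proof -
    have "(2::real)^(m*n) = 2^m * K" unfolding K_def
      by (subst n1) (simp add: power_mult[symmetric] power_add[symmetric])
    moreover have "K \<noteq> 0" by (simp add: K_def)
    ultimately show ?thesis by (simp add: power_one_over)
  qed
  have "influence (1/2) (m * n) g ?j = (1/2)^(m*n) * ((c True + c False) / 2 * (K * (\<Sum>x\<in>cube n. Df x * R' x)))"
    unfolding s1 s2 s4 s5 s6 by (simp add: sum_distrib_left mult.left_commute)
  also have "\<dots> = ((1::real)/2)^(m*n) * K * real (Acnt m t r) * influence p n f i0"
    unfolding s7 fI by simp
  also have "\<dots> = real (Acnt m t r) / 2^m * influence p n f i0"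
    unfolding pw by simp
  finally show ?thesis unfolding g_def .
qed




lemma sum_add_interval: fixes a b :: nat shows "(\<Sum>j<a+b. F j) = (\<Sum>j<a. F j) + (\<Sum>r<b. F (a+r))"
  by (induction b) (auto simp: add.assoc)

lemma sum_blocks: fixes m n :: nat shows "(\<Sum>j<m*n. F j) = (\<Sum>i<n. \<Sum>r<m. F (i*m + r))"
proof (induction n)
  case 0 then show ?case by simp
next
  case (Suc n)
  have "m * Suc n = m * n + m" by simp
  hence "(\<Sum>j<m * Suc n. F j) = (\<Sum>j<m*n. F j) + (\<Sum>r<m. F (m*n + r))"
    by (simp only: sum_add_interval)
  thus ?case using Suc by (simp add: mult.commute)
qed

theorem proposition2p6:
  fixes m t n :: nat and p :: real and f :: "(nat \<Rightarrow> bool) \<Rightarrow> bool"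
  assumes "m \<ge> 1" and "1 \<le> t" and "t \<le> 2 ^ (m - 1)"
    and "p = real t / 2 ^ m"
  shows "(\<Sum>i<m * n. (influence (1/2) (m * n) (Red m t n f) i)\<^sup>2)
           \<le> 12 * p\<^sup>2 * real_of_int \<lfloor>log 2 (1 / p)\<rfloor> * (\<Sum>i<n. (influence p n f i)\<^sup>2)"
proof -
  note m = assms(1) and t1 = assms(2) and t2 = assms(3) and p = assms(4)
  have tm: "t \<le> 2^m" using t2 m by (metis diff_le_self le_trans one_le_numeral power_increasing)
  have "(\<Sum>i<m * n. (influence (1/2) (m * n) (Red m t n f) i)\<^sup>2)
      = (\<Sum>i<n. \<Sum>r<m. (influence (1/2) (m * n) (Red m t n f) (i*m+r))\<^sup>2)"
    by (rule sum_blocks)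
  also have "\<dots> = (\<Sum>i<n. \<Sum>r<m. (real (Acnt m t r) / 2^m)\<^sup>2 * (influence p n f i)\<^sup>2)"
    by (intro sum.cong refl) (simp add: infl_g[OF m tm _ _ p] power_mult_distrib power_divide)
  also have "\<dots> = (\<Sum>r<m. (real (Acnt m t r) / 2^m)\<^sup>2) * (\<Sum>i<n. (influence p n f i)\<^sup>2)"
    by (simp add: sum_distrib_left sum_distrib_right mult.commute sum.swap[of _ "{..<n}"])
  also have "\<dots> \<le> 12 * p\<^sup>2 * real_of_int \<lfloor>log 2 (1 / p)\<rfloor> * (\<Sum>i<n. (influence p n f i)\<^sup>2)"
    by (rule mult_right_mono[OF coef_bound[OF m t1 t2 p]]) (simp add: sum_nonneg)
  finally show ?thesis .
qed


end
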